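(* Let $p$ be a prime, let $(R,u)$ be a $\mathbb{Z}_p$-algebra with a filtration $u:R\to\mathbb{Z}\cup\{\infty\}$, and let $\sigma$ be an automorphism of $R$ such that the skew derivation $(\sigma,\sigma-\mathrm{id})$ is compatible with $u$. Suppose $u(p)\geq1$ and $\deg_u(\sigma-\mathrm{id})\geq1$. Then $\deg_u(\sigma^{p^n}-\mathrm{id})\geq n$ for all $n\in\mathbb{N}$.
   Context: A filtration $u$ satisfies $u(0)=\infty$, $u(x+y)\geq\min\{u(x),u(y)\}$, $u(xy)\geq u(x)+u(y)$, and is separated ($u(x)=\infty\iff x=0$). For an additive map $d:R\to R$, $\deg_u(d)=\inf_{x\neq0}\{u(d(x))-u(x)\}$. A skew derivation $(\sigma,\delta)$ ($\sigma$ automorphism, $\delta(ab)=\delta(a)b+\sigma(a)\delta(b)$) is compatible with $u$ if $\deg_u(\sigma-\mathrm{id})>0$ and $\deg_u(\delta)>0$. *)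

theory Defs
  imports "HOL-Library.Extended_Real" "HOL-Computational_Algebra.Primes"
begin

definition filtration :: "('a::ring_1 \<Rightarrow> ereal) \<Rightarrow> bool" where
  "filtration u \<longleftrightarrow>
     (\<forall>x. u x = \<infinity> \<or> (\<exists>k::int. u x = ereal (of_int k))) \<and>
     u 0 = \<infinity> \<and>
     (\<forall>x y. u (x + y) \<ge> min (u x) (u y)) \<and>
     (\<forall>x y. u (x * y) \<ge> u x + u y) \<and>
     (\<forall>x. u x = \<infinity> \<longleftrightarrow> x = 0)"

definition deg_u :: "('a::ring_1 \<Rightarrow> ereal) \<Rightarrow> ('a \<Rightarrow> 'a) \<Rightarrow> ereal" where
  "deg_u u d = (INF x\<in>{x. x \<noteq> 0}. u (d x) - u x)"

definition ring_automorphism :: "('a::ring_1 \<Rightarrow> 'a) \<Rightarrow> bool" where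
  "ring_automorphism \<sigma> \<longleftrightarrow> bij \<sigma> \<and> (\<forall>x y. \<sigma> (x + y) = \<sigma> x + \<sigma> y) \<and>
     (\<forall>x y. \<sigma> (x * y) = \<sigma> x * \<sigma> y) \<and> \<sigma> 1 = 1"

definition skew_derivation :: "('a::ring_1 \<Rightarrow> 'a) \<Rightarrow> ('a \<Rightarrow> 'a) \<Rightarrow> bool" where
  "skew_derivation \<sigma> \<delta> \<longleftrightarrow> ring_automorphism \<sigma> \<and>
     (\<forall>x y. \<delta> (x + y) = \<delta> x + \<delta> y) \<and>
     (\<forall>a b. \<delta> (a * b) = \<delta> a * b + \<sigma> a * \<delta> b)"

definition compatible :: "('a::ring_1 \<Rightarrow> ereal) \<Rightarrow> ('a \<Rightarrow> 'a) \<Rightarrow> ('a \<Rightarrow> 'a) \<Rightarrow> bool" where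
  "compatible u \<sigma> \<delta> \<longleftrightarrow> skew_derivation \<sigma> \<delta> \<and>
     deg_u u (\<lambda>x. \<sigma> x - x) > 0 \<and> deg_u u \<delta> > 0"

end

theory Submission
  imports Defs
begin

definition dbound :: "('a::ring_1 \<Rightarrow> ereal) \<Rightarrow> real \<Rightarrow> ('a \<Rightarrow> 'a) \<Rightarrow> bool" where
  "dbound u c f \<longleftrightarrow> (\<forall>x. ereal c + u x \<le> u (f x))"

lemma filt_fin: "filtration u \<Longrightarrow> x \<noteq> 0 \<Longrightarrow> \<exists>k::int. u x = ereal (of_int k)"
  unfolding filtration_def by metis

lemma filt_notminf: "filtration u \<Longrightarrow> u x \<noteq> -\<infinity>"
  unfolding filtration_def by (metis MInfty_neq_PInfty(1) MInfty_neq_ereal(1))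

lemma deg_to_dbound:
  assumes "filtration u" "deg_u u f \<ge> ereal c" "f 0 = 0"
  shows "dbound u c f"
  unfolding dbound_def
proof
  fix x
  show "ereal c + u x \<le> u (f x)"
  proof (cases "x = 0")
    case True
    then show ?thesis using assms unfolding filtration_def by simp
  next
    case False
    then obtain k::int where k: "u x = ereal (of_int k)" using filt_fin assms(1) by blast
    have "deg_u u f \<le> u (f x) - u x" unfolding deg_u_def using False by (auto intro: INF_lower)
    then have "ereal c \<le> u (f x) - ereal (of_int k)" using assms(2) k by simp
    then show ?thesis using k by (simp add: ereal_le_minus_iff add.commute)
  qed
qed

lemma dbound_to_deg:
  assumes "filtration u" "dbound u c f"
  shows "deg_u u f \<ge> ereal c"
  unfolding deg_u_def
proof (rule INF_greatest)
  fix x :: 'a assume "x \<in> {x. x \<noteq> 0}"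
  then obtain k::int where k: "u x = ereal (of_int k)" using filt_fin assms(1) by blast
  have "ereal c + u x \<le> u (f x)" using assms(2) unfolding dbound_def by blast
  then show "ereal c \<le> u (f x) - u x" using k by (simp add: ereal_le_minus_iff add.commute)
qed

lemma u_add: "filtration u \<Longrightarrow> b \<le> u x \<Longrightarrow> b \<le> u y \<Longrightarrow> b \<le> u (x + y)"
  unfolding filtration_def by (metis min.bounded_iff order_trans)

lemma u_sum: "filtration u \<Longrightarrow> (\<And>i. i \<in> A \<Longrightarrow> b \<le> u (f i)) \<Longrightarrow> b \<le> u (sum f A)"
proof (induction A rule: infinite_finite_induct)
  case (infinite A)
  then show ?case unfolding filtration_def by simp
next
  case empty
  then show ?case unfolding filtration_def by simp
next
  case (insert x F)
  then show ?case using u_add[OF insert.prems(1)] by simp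
qed

lemma funpow_additive:
  fixes s :: "'a::ring_1 \<Rightarrow> 'a"
  assumes "\<And>x y. s (x + y) = s x + s y"
  shows "(s ^^ m) (x + y) = (s ^^ m) x + (s ^^ m) y"
proof (induction m arbitrary: x y)
  case 0 show ?case by simp
next
  case (Suc m) show ?case by (simp only: funpow.simps(2) o_apply Suc.IH assms)
qed

lemma step_lemma:
  fixes t :: "'a::ring_1 \<Rightarrow> 'a" and p :: nat
  assumes fu: "filtration u" and add: "\<And>x y. t (x + y) = t x + t y"
    and db: "dbound u c (\<lambda>x. t x - x)" and c1: "c \<ge> 1" and up: "u (of_nat p) \<ge> 1"
  shows "dbound u (c + 1) (\<lambda>x. (t ^^ p) x - x)"
proof -
  have nm: "\<And>x. u x \<noteq> -\<infinity>" using filt_notminf[OF fu] by blast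
  have dbx: "\<And>x. ereal c + u x \<le> u (t x - x)" using db unfolding dbound_def by blast
  have ge: "\<And>x. u x \<le> u (t x)"
  proof -
    fix x
    have "u x \<le> ereal c + u x" using c1 nm[of x]
      by (cases "u x") auto
    also have "\<dots> \<le> u (t x - x)" by (rule dbx)
    finally have "u x \<le> u (t x - x)" .
    moreover have "t x = x + (t x - x)" by simp
    ultimately show "u x \<le> u (t x)" using u_add[OF fu, of "u x" x "t x - x"] by simp
  qed
  have powb: "\<And>i x. ereal c + u x \<le> u ((t ^^ i) x - x)"
  proof -
    fix i x show "ereal c + u x \<le> u ((t ^^ i) x - x)"
    proof (induction i arbitrary: x)
      case 0
      then show ?case using fu unfolding filtration_def by simp
    next
      case (Suc i)
      have eq: "(t ^^ Suc i) x - x = ((t ^^ i) (t x) - t x) + (t x - x)"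
        by (simp add: funpow_Suc_right del: funpow.simps)
      have a: "ereal c + u x \<le> ereal c + u (t x)" using ge[of x] by (simp add: add_left_mono)
      show ?case unfolding eq
        by (rule u_add[OF fu]) (use a Suc.IH[of "t x"] dbx[of x] in auto)
    qed
  qed
  have sub: "\<And>m x y. (t ^^ m) (x - y) = (t ^^ m) x - (t ^^ m) y"
  proof -
    fix m x y
    have "(t ^^ m) (x - y) + (t ^^ m) y = (t ^^ m) x"
      using funpow_additive[of t m "x - y" y, OF add] by simp
    then show "(t ^^ m) (x - y) = (t ^^ m) x - (t ^^ m) y" by (simp add: eq_diff_eq)
  qed
  have ident: "\<And>m x. (t ^^ m) x - x = of_nat m * (t x - x) + (\<Sum>i<m. (t ^^ i) (t x - x) - (t x - x))"
  proof -
    fix m x show "(t ^^ m) x - x = of_nat m * (t x - x) + (\<Sum>i<m. (t ^^ i) (t x - x) - (t x - x))"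
    proof (induction m)
      case 0 then show ?case by simp
    next
      case (Suc m)
      have "(t ^^ Suc m) x - x = ((t ^^ m) x - x) + (t ^^ m) (t x - x)"
        by (simp add: sub funpow_Suc_right del: funpow.simps)
      also have "\<dots> = of_nat (Suc m) * (t x - x) + (\<Sum>i<Suc m. (t ^^ i) (t x - x) - (t x - x))"
        unfolding Suc.IH by (simp add: algebra_simps)
      finally show ?case .
    qed
  qed
  show ?thesis unfolding dbound_def
  proof
    fix x
    let ?e = "t x - x"
    have t1: "ereal (c + 1) + u x \<le> u (of_nat p * ?e)"
    proof -
      have e1: "ereal (c + 1) = 1 + ereal c" by (simp add: one_ereal_def)
      have "ereal (c + 1) + u x = 1 + (ereal c + u x)" unfolding e1 by (rule add.assoc)
      also have "\<dots> \<le> u (of_nat p) + u ?e" by (rule add_mono[OF up dbx])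
      also have "\<dots> \<le> u (of_nat p * ?e)" using fu unfolding filtration_def by blast
      finally show ?thesis .
    qed
    have t2: "ereal (c + 1) + u x \<le> u ((t ^^ i) ?e - ?e)" for i
    proof -
      have "ereal (c + 1) + u x \<le> ereal c + (ereal c + u x)"
        using c1 nm[of x] by (cases "u x") auto
      also have "\<dots> \<le> ereal c + u ?e" by (rule add_left_mono[OF dbx])
      also have "\<dots> \<le> u ((t ^^ i) ?e - ?e)" by (rule powb)
      finally show ?thesis .
    qed
    have "ereal (c + 1) + u x \<le> u (of_nat p * ?e + (\<Sum>i<p. (t ^^ i) ?e - ?e))"
      by (rule u_add[OF fu t1], rule u_sum[OF fu], rule t2)
    then show "ereal (c + 1) + u x \<le> u ((t ^^ p) x - x)"
      by (subst ident[of p x])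
  qed
qed

theorem lemma1p2p5:
  fixes p :: nat and u :: "'a::ring_1 \<Rightarrow> ereal" and \<sigma> :: "'a \<Rightarrow> 'a"
  assumes "prime p"
    and "filtration u"
    and "ring_automorphism \<sigma>"
    and "compatible u \<sigma> (\<lambda>x. \<sigma> x - x)"
    and "u (of_nat p) \<ge> 1"
    and "deg_u u (\<lambda>x. \<sigma> x - x) \<ge> 1"
  shows "\<forall>n::nat. deg_u u (\<lambda>x. (\<sigma> ^^ (p ^ n)) x - x) \<ge> ereal (real n)"
proof
  have add: "\<And>x y. \<sigma> (x + y) = \<sigma> x + \<sigma> y" using assms(3) unfolding ring_automorphism_def by blast
  have addn: "\<And>m x y. (\<sigma> ^^ m) (x + y) = (\<sigma> ^^ m) x + (\<sigma> ^^ m) y"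
    by (rule funpow_additive[OF add])
  have z: "\<And>m. (\<sigma> ^^ m) 0 = 0"
    using addn[of _ 0 0] by simp
  have main: "dbound u (real n + 1) (\<lambda>x. (\<sigma> ^^ (p ^ n)) x - x)" for n
  proof (induction n)
    case 0
    show ?case using deg_to_dbound[OF assms(2), where f="\<lambda>x. \<sigma> x - x" and c=1] assms(6) z[of 1]
      by (simp add: one_ereal_def)
  next
    case (Suc n)
    have "dbound u (real n + 1 + 1) (\<lambda>x. ((\<sigma> ^^ (p ^ n)) ^^ p) x - x)"
      by (rule step_lemma[OF assms(2) addn Suc.IH _ assms(5)]) simp
    moreover have "(\<sigma> ^^ (p ^ n)) ^^ p = \<sigma> ^^ (p ^ Suc n)"
      by (simp only: funpow_mult power_Suc2)
    moreover have "real n + 1 + 1 = real (Suc n) + 1" by simp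
    ultimately show ?case by simp
  qed
  fix n :: nat
  have "deg_u u (\<lambda>x. (\<sigma> ^^ (p ^ n)) x - x) \<ge> ereal (real n + 1)"
    by (rule dbound_to_deg[OF assms(2) main])
  then show "deg_u u (\<lambda>x. (\<sigma> ^^ (p ^ n)) x - x) \<ge> ereal (real n)"
    by (rule order_trans[rotated]) simp
qed

end
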